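(* Let $p\ge3$ be a prime, let $c>0$, let $M=\lceil 2p^2\log p/(c\pi^2)\rceil$, and let $D$ be a probability distribution on $\mathbb{F}_p$ such that $D(x)\le1-c$ for each $x\in\mathbb{F}_p$. If $A\subset\mathbb{F}_p^n$ has density $\epsilon$ with respect to $D^n$, then the sumset $(p-1)MA$ has density at least $\epsilon^{(p-1)M}$ inside $\mathbb{F}_p^n$ with respect to the uniform distribution on $\mathbb{F}_p^n$.
   Context: $D^n$ is the distribution on $\mathbb{F}_p^n$ whose coordinates are independent with distribution $D$; the density of $A$ with respect to a distribution $\mu$ is $\sum_{x\in A}\mu(x)$. For a positive integer $K$, $KA=\{a_1+\dots+a_K:a_i\in A\}$ is the $K$-fold sumset. *)

theory Defs
  imports Complex_Main "HOL-Library.FuncSet" "HOL-Computational_Algebra.Primes"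
begin

text \<open>F_p is modelled as {0..<p} with arithmetic mod p; F_p^n as the extensional
functions {0..<n} -> {0..<p}.\<close>

definition Fp_vecs :: "nat \<Rightarrow> nat \<Rightarrow> (nat \<Rightarrow> nat) set" where
  "Fp_vecs p n = ({..<n} \<rightarrow>\<^sub>E {..<p})"

definition vadd :: "nat \<Rightarrow> nat \<Rightarrow> (nat \<Rightarrow> nat) \<Rightarrow> (nat \<Rightarrow> nat) \<Rightarrow> (nat \<Rightarrow> nat)" where
  "vadd p n x y = (\<lambda>i\<in>{..<n}. (x i + y i) mod p)"

definition vzero :: "nat \<Rightarrow> (nat \<Rightarrow> nat)" where
  "vzero n = (\<lambda>i\<in>{..<n}. 0)"

primrec ksumset :: "nat \<Rightarrow> nat \<Rightarrow> nat \<Rightarrow> (nat \<Rightarrow> nat) set \<Rightarrow> (nat \<Rightarrow> nat) set" where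
  "ksumset p n 0 A = {vzero n}"
| "ksumset p n (Suc K) A = {vadd p n a b | a b. a \<in> A \<and> b \<in> ksumset p n K A}"

definition prod_density :: "nat \<Rightarrow> (nat \<Rightarrow> real) \<Rightarrow> (nat \<Rightarrow> nat) set \<Rightarrow> real" where
  "prod_density n D A = (\<Sum>x\<in>A. \<Prod>i<n. D (x i))"

definition unif_density :: "nat \<Rightarrow> nat \<Rightarrow> (nat \<Rightarrow> nat) set \<Rightarrow> real" where
  "unif_density p n A = real (card A) / real p ^ n"

end

theory Submission
  imports Defs "HOL-Analysis.Analysis" "HOL-Number_Theory.Cong"
begin


lemma ln_interp:
  fixes \<tau> b :: real
  assumes "0 < \<tau>" "\<tau> \<le> b" "b \<le> 1" "\<tau> < 1"
  shows "ln b \<ge> (1 - b) / (1 - \<tau>) * ln \<tau>"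
proof -
  define u where "u = (1 - b) / (1 - \<tau>)"
  have u0: "u \<ge> 0" "u \<le> 1" using assms by (auto simp: u_def divide_simps)
  have h: "u * (1 - \<tau>) = 1 - b" using assms by (simp add: u_def)
  have "u * \<tau> + (1 - u) * 1 = 1 - u * (1 - \<tau>)" by (simp add: algebra_simps)
  then have bu: "b = u * \<tau> + (1 - u) * 1" using h by linarith
  have "ln (u *\<^sub>R \<tau> + (1 - u) *\<^sub>R 1) \<ge> u * ln \<tau> + (1 - u) * ln 1"
    using ln_concave[unfolded concave_on_iff, THEN conjunct2, rule_format, of \<tau> 1 u "1 - u"] assms u0 by simp
  then have "u * ln \<tau> \<le> ln b" using bu by simp
  then show ?thesis unfolding u_def .
qed

lemma aux1: fixes x y :: real assumes "x \<ge> 3" "y > 0" shows "x^2*y/5*(x-1) \<ge> x*y"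
proof -
  have "x*(x-1) \<ge> 3*2" using assms by (intro mult_mono) auto
  then have "x*(x-1) - 5 \<ge> 0" by simp
  then have "x*y*(x*(x-1) - 5)/5 \<ge> 0" using assms by simp
  moreover have "x^2*y/5*(x-1) - x*y = x*y*(x*(x-1) - 5)/5" by (simp add: field_simps power2_eq_square)
  ultimately show ?thesis by linarith
qed

lemma psi_bounds:
  fixes p M :: nat and c :: real
  assumes p3: "p \<ge> 3" and c0: "c > 0" and c1: "c \<le> 1"
    and MM: "M = nat \<lceil>2 * real p ^ 2 * ln (real p) / (c * pi ^ 2)\<rceil>"
  defines "\<tau> \<equiv> 1 - ln (real p) / (c * M)"
  shows "0 < \<tau>" "\<tau> < 1" "M \<ge> 1"
    "\<And>b. \<tau> \<le> b \<Longrightarrow> b \<le> 1 \<Longrightarrow> (1 - c * (1 - b)) ^ M \<le> b"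
    "(1 - c * (1 - \<tau>)) ^ M \<le> 1 / real p"
proof -
  have lnp: "ln (real p) > 0" using p3 by simp
  have pi315: "pi \<le> 3.15" using pi_approx by simp
  have "pi * pi \<le> 3.15 * 3.15" by (rule mult_mono) (use pi315 in auto)
  then have pi2: "pi ^ 2 \<le> 10" by (simp add: power2_eq_square)
  have x0: "2 * real p ^ 2 * ln (real p) / (c * pi ^ 2) > 0" using lnp c0 p3 by auto
  have "real M = of_int \<lceil>2 * real p ^ 2 * ln (real p) / (c * pi ^ 2)\<rceil>"
    using MM x0 by simp
  then have Mx: "real M \<ge> 2 * real p ^ 2 * ln (real p) / (c * pi ^ 2)"
    by (simp add: le_of_int_ceiling)
  then show "M \<ge> 1" using x0 by linarith
  define L where "L = c * M"
  have L: "L \<ge> 2 * real p ^ 2 * ln (real p) / pi ^ 2"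
  proof -
    have "c * real M \<ge> c * (2 * real p ^ 2 * ln (real p) / (c * pi ^ 2))"
      by (rule mult_left_mono[OF Mx]) (use c0 in simp)
    moreover have "c * (2 * real p ^ 2 * ln (real p) / (c * pi ^ 2)) = 2 * real p ^ 2 * ln (real p) / pi ^ 2"
      using c0 by simp
    ultimately show ?thesis by (simp add: L_def)
  qed
  have "2 * real p ^ 2 * ln (real p) / pi ^ 2 \<ge> 2 * real p ^ 2 * ln (real p) / 10"
  proof (rule divide_left_mono[OF pi2])
    show "0 \<le> 2 * real p ^ 2 * ln (real p)" using lnp by simp
    have "pi ^ 2 > 0" by simp
    then show "0 < 10 * pi ^ 2" by simp
  qed
  moreover have "2 * real p ^ 2 * ln (real p) / 10 = real p ^ 2 * ln (real p) / 5" by simp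
  ultimately have L2: "L \<ge> real p ^ 2 * ln (real p) / 5" using L by linarith
  have key: "L * (real p - 1) \<ge> real p * ln (real p)"
  proof -
    have "real p ^ 2 * ln (real p) / 5 * (real p - 1) \<ge> real p * ln (real p)"
      by (rule aux1) (use p3 lnp in auto)
    moreover have "L * (real p - 1) \<ge> real p ^ 2 * ln (real p) / 5 * (real p - 1)"
      using L2 p3 by (intro mult_right_mono) auto
    ultimately show ?thesis by linarith
  qed
  have "real p * ln (real p) > 0" using lnp p3 by simp
  then have "L * (real p - 1) > 0" using key by linarith
  then have Lpos: "L > 0" using p3 by (simp add: zero_less_mult_iff)
  have tau: "\<tau> = 1 - ln (real p) / L" by (simp add: \<tau>_def L_def)
  have tau_ge: "\<tau> \<ge> 1 / real p"
  proof -
    have pL: "real p * L > 0" using Lpos p3 by simp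
    have "(real p * ln (real p)) / (real p * L) \<le> (L * (real p - 1)) / (real p * L)"
      by (rule divide_right_mono[OF key]) (use pL in simp)
    moreover have "(real p * ln (real p)) / (real p * L) = ln (real p) / L" using p3 by simp
    moreover have "(L * (real p - 1)) / (real p * L) = (real p - 1) / real p" using Lpos by simp
    ultimately have h: "ln (real p) / L \<le> (real p - 1) / real p" by simp
    have "1 - (real p - 1) / real p = 1 / real p" using p3 by (simp add: field_simps)
    then show ?thesis using h tau by linarith
  qed
  have "1 / real p > 0" using p3 by simp
  then show t0: "0 < \<tau>" using tau_ge by linarith
  show t1: "\<tau> < 1" using tau lnp Lpos by simp
  have expb: "(1 - c * (1 - b)) ^ M \<le> exp (- L * (1 - b))" if "b \<le> 1" "0 \<le> b" for b
  proof -
    have "1 - c * (1 - b) \<le> exp (- c * (1 - b))" using exp_ge_add_one_self[of "- c * (1 - b)"] by simp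
    moreover have "0 \<le> 1 - c * (1 - b)" using mult_le_one[of c "1 - b"] that c1 by linarith
    ultimately have "(1 - c * (1 - b)) ^ M \<le> exp (- c * (1 - b)) ^ M" by (rule power_mono)
    also have "\<dots> = exp (real M * (- c * (1 - b)))" by (simp only: exp_of_nat_mult)
    also have "real M * (- c * (1 - b)) = - L * (1 - b)" by (simp add: L_def algebra_simps)
    finally show ?thesis .
  qed
  show "(1 - c * (1 - \<tau>)) ^ M \<le> 1 / real p"
  proof -
    have "(1 - c * (1 - \<tau>)) ^ M \<le> exp (- L * (1 - \<tau>))" using expb t0 t1 by simp
    also have "- L * (1 - \<tau>) = - ln (real p)" using tau Lpos by simp
    also have "exp (- ln (real p)) = 1 / real p" using p3 by (simp add: exp_minus inverse_eq_divide)
    finally show ?thesis .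
  qed
  show "(1 - c * (1 - b)) ^ M \<le> b" if "\<tau> \<le> b" "b \<le> 1" for b
  proof -
    have b0: "b > 0" using that t0 by simp
    have "(1 - c * (1 - b)) ^ M \<le> exp (- L * (1 - b))" using expb that b0 by simp
    also have "\<dots> \<le> exp (ln b)"
    proof -
      have "ln b \<ge> (1 - b) / (1 - \<tau>) * ln \<tau>" by (rule ln_interp) (use that t0 t1 in auto)
      moreover have "ln \<tau> \<ge> - ln (real p)"
      proof -
        have "ln (1 / real p) \<le> ln \<tau>" using tau_ge p3 t0 by (subst ln_le_cancel_iff) auto
        moreover have "ln (1 / real p) = - ln (real p)" using p3 by (simp add: ln_div)
        ultimately show ?thesis by simp
      qed
      moreover have "(1 - b) / (1 - \<tau>) * (- ln (real p)) = - L * (1 - b)"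
      proof -
        have e: "1 - \<tau> = ln (real p) / L" using tau by simp
        show ?thesis unfolding e using lnp Lpos by (simp add: field_simps)
      qed
      moreover have "(1 - b) / (1 - \<tau>) * ln \<tau> \<ge> (1 - b) / (1 - \<tau>) * (- ln (real p))"
        by (rule mult_left_mono) (use that t1 \<open>ln \<tau> \<ge> - ln (real p)\<close> in auto)
      ultimately have "ln b \<ge> - L * (1 - b)" by linarith
      then show ?thesis by simp
    qed
    also have "\<dots> = b" using b0 by simp
    finally show ?thesis .
  qed
qed



definition subsums :: "nat \<Rightarrow> (nat \<Rightarrow> int) \<Rightarrow> nat \<Rightarrow> int set" where
  "subsums p d m = {(\<Sum>j\<in>S. d j) mod int p | S. S \<subseteq> {..<m}}"

lemma subsums_sub: "p > 0 \<Longrightarrow> subsums p d m \<subseteq> {0..<int p}"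
  by (auto simp: subsums_def)

lemma subsums_fin: "p > 0 \<Longrightarrow> finite (subsums p d m)"
  by (rule finite_subset[OF subsums_sub]) auto

lemma zero_in_subsums: "0 \<in> subsums p d m"
proof -
  have "0 = (\<Sum>j\<in>{}. d j) mod int p \<and> {} \<subseteq> {..<m}" by simp
  then show ?thesis unfolding subsums_def by blast
qed

lemma subsums_mono: "subsums p d m \<subseteq> subsums p d (Suc m)"
proof
  fix x assume "x \<in> subsums p d m"
  then obtain S where "S \<subseteq> {..<m}" "x = (\<Sum>j\<in>S. d j) mod int p" unfolding subsums_def by auto
  moreover have "S \<subseteq> {..<Suc m}" using calculation(1) by auto
  ultimately show "x \<in> subsums p d (Suc m)" unfolding subsums_def by blast
qed

lemma subsums_step:
  assumes "x \<in> subsums p d m"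
  shows "(x + d m) mod int p \<in> subsums p d (Suc m)"
proof -
  obtain S where S: "S \<subseteq> {..<m}" "x = (\<Sum>j\<in>S. d j) mod int p"
    using assms unfolding subsums_def by auto
  have fin: "finite S" using S(1) finite_subset by blast
  have mS: "m \<notin> S" using S(1) by auto
  have "(\<Sum>j\<in>insert m S. d j) = d m + (\<Sum>j\<in>S. d j)" using fin mS by simp
  then have "(x + d m) mod int p = (\<Sum>j\<in>insert m S. d j) mod int p"
    using S(2) by (simp add: mod_add_right_eq add.commute)
  moreover have "insert m S \<subseteq> {..<Suc m}" using S(1) by auto
  ultimately show ?thesis unfolding subsums_def by blast
qed

lemma closed_all:
  assumes p: "prime p" and d: "\<not> int p dvd e"
    and cl: "\<And>x. x \<in> R \<Longrightarrow> (x + e) mod int p \<in> R" and z: "0 \<in> R"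
  shows "{0..<int p} \<subseteq> R"
proof -
  have k: "(int k * e) mod int p \<in> R" for k
  proof (induction k)
    case 0 then show ?case using z by simp
  next
    case (Suc k)
    have "(int (Suc k) * e) mod int p = ((int k * e) mod int p + e) mod int p"
      by (simp add: algebra_simps mod_add_right_eq)
    then show ?case using cl[OF Suc] by simp
  qed
  have "coprime e (int p)"
    using p d by (metis coprime_commute prime_imp_coprime prime_nat_int_transfer)
  then obtain x where x: "[e * x = 1] (mod int p)" using cong_solve_coprime_int by blast
  show ?thesis
  proof
    fix r assume r: "r \<in> {0..<int p}"
    define k where "k = nat ((x * r) mod int p)"
    have pp: "int p > 0" using p prime_gt_0_nat by simp
    have "int k = (x * r) mod int p" unfolding k_def using pp by simp
    then have "(int k * e) mod int p = ((x * r) mod int p * e) mod int p" by simp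
    also have "\<dots> = ((e * x) * r) mod int p" by (simp add: mod_mult_left_eq mod_mult_right_eq algebra_simps)
    also have "\<dots> = (1 * r) mod int p" using x by (metis cong_def mod_mult_left_eq)
    also have "\<dots> = r" using r by simp
    finally show "r \<in> R" using k[of k] by simp
  qed
qed

lemma subsums_card:
  assumes p: "prime p" and d: "\<forall>j<m. \<not> int p dvd d j"
  shows "card (subsums p d m) \<ge> min p (m + 1)"
  using d
proof (induction m)
  case 0
  have "subsums p d 0 = {0}" unfolding subsums_def by auto
  then show ?case by simp
next
  case (Suc m)
  have pp: "p > 0" using p prime_gt_0_nat by simp
  have IH: "card (subsums p d m) \<ge> min p (m + 1)" using Suc by auto
  have fin: "finite (subsums p d (Suc m))" using subsums_fin pp by blast
  show ?case
  proof (cases "card (subsums p d m) \<ge> p")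
    case True
    then show ?thesis using card_mono[OF fin subsums_mono[of p d m]] by simp
  next
    case False
    have "\<exists>x\<in>subsums p d m. (x + d m) mod int p \<notin> subsums p d m"
    proof (rule ccontr)
      assume "\<not> ?thesis"
      then have "{0..<int p} \<subseteq> subsums p d m"
        by (intro closed_all[OF p, of "d m"]) (use Suc.prems zero_in_subsums in auto)
      then have "card {0..<int p} \<le> card (subsums p d m)"
        using subsums_fin[OF pp] by (intro card_mono) auto
      then show False using False by simp
    qed
    then obtain x where x: "x \<in> subsums p d m" "(x + d m) mod int p \<notin> subsums p d m" by blast
    have "insert ((x + d m) mod int p) (subsums p d m) \<subseteq> subsums p d (Suc m)"
      using subsums_step[OF x(1)] subsums_mono by blast
    then have "card (insert ((x + d m) mod int p) (subsums p d m)) \<le> card (subsums p d (Suc m))"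
      by (intro card_mono fin)
    moreover have "card (insert ((x + d m) mod int p) (subsums p d m)) = Suc (card (subsums p d m))"
      using x(2) subsums_fin[OF pp] by simp
    ultimately show ?thesis using IH by linarith
  qed
qed

lemma subsums_all:
  assumes p: "prime p" and d: "\<forall>j<p-1. \<not> int p dvd d j" and r: "0 \<le> r" "r < int p"
  shows "\<exists>S\<subseteq>{..<p-1}. (\<Sum>j\<in>S. d j) mod int p = r"
proof -
  have pp: "p > 0" using p prime_gt_0_nat by simp
  have "card (subsums p d (p-1)) \<ge> p" using subsums_card[OF p d] pp by simp
  moreover have "card {0..<int p} = p" by simp
  ultimately have "subsums p d (p-1) = {0..<int p}"
    using subsums_sub[OF pp] by (metis card_seteq finite_atLeastLessThan_int)
  then have "r \<in> subsums p d (p-1)" using r by simp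
  then show ?thesis unfolding subsums_def by blast
qed


lemma finite_argmax:
  fixes f :: "'a \<Rightarrow> real"
  assumes "finite S" "S \<noteq> {}"
  shows "\<exists>x\<in>S. \<forall>y\<in>S. f y \<le> f x"
proof -
  have "Max (f ` S) \<in> f ` S" using assms by (intro Max_in) auto
  then obtain x where x: "x \<in> S" "f x = Max (f ` S)" by auto
  have "\<forall>y\<in>S. f y \<le> f x" using x assms by auto
  then show ?thesis using x(1) by blast
qed

lemma prod_le_single:
  fixes f :: "'a \<Rightarrow> real"
  assumes "finite A" "j \<in> A" "\<forall>i\<in>A. 0 \<le> f i \<and> f i \<le> 1"
  shows "prod f A \<le> f j"
proof -
  have "prod f A = f j * prod f (A - {j})" using assms by (simp add: prod.remove)
  moreover have "prod f (A - {j}) \<le> 1" using assms by (intro prod_le_1) auto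
  moreover have "f j \<ge> 0" using assms by auto
  ultimately show ?thesis by (metis mult_left_mono mult.right_neutral)
qed

lemma prod_sub_ge:
  fixes f :: "'a \<Rightarrow> real"
  assumes "finite A" "S \<subseteq> A" "\<forall>i\<in>A. 0 \<le> f i \<and> f i \<le> 1"
  shows "prod f A \<le> prod f S"
proof -
  have "prod f A = prod f S * prod f (A - S)" using assms by (metis prod.subset_diff mult.commute)
  moreover have "prod f (A - S) \<le> 1" using assms by (intro prod_le_1) auto
  moreover have "prod f S \<ge> 0" using assms by (intro prod_nonneg) auto
  ultimately show ?thesis by (metis mult_left_mono mult.right_neutral)
qed

lemma block_div:
  fixes M j x :: nat
  assumes "x \<in> {j*M..<j*M+M}"
  shows "x div M = j"
  using assms by (intro div_nat_eqI) (auto simp: mult.commute)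



lemma dim1:
  fixes p M :: nat and c :: real and D :: "nat \<Rightarrow> real" and g :: "nat \<Rightarrow> nat \<Rightarrow> real"
    and H :: "nat \<Rightarrow> real"
  assumes pp: "prime p" and p3: "p \<ge> 3" and c0: "c > 0"
    and MM: "M = nat \<lceil>2 * real p ^ 2 * ln (real p) / (c * pi ^ 2)\<rceil>"
    and D0: "\<forall>x<p. D x \<ge> 0" and D1: "(\<Sum>x<p. D x) = 1" and Dc: "\<forall>x<p. D x \<le> 1 - c"
    and g0: "\<forall>i<(p-1)*M. \<forall>t<p. g i t \<ge> 0"
    and Hb: "\<And>t. (\<forall>i<(p-1)*M. t i < p) \<Longrightarrow>
               H ((\<Sum>i<(p-1)*M. t i) mod p) \<ge> (\<Prod>i<(p-1)*M. g i (t i))"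
  shows "(\<Sum>s<p. H s) \<ge> real p * (\<Prod>i<(p-1)*M. \<Sum>t<p. D t * g i t)"
proof -
  define K where "K = (p-1)*M"
  have c1: "c \<le> 1" using D0 Dc p3 by force
  define \<tau> where "\<tau> = 1 - ln (real p) / (c * M)"
  note psi = psi_bounds[OF p3 c0 c1 MM, folded \<tau>_def]
  have M1: "M \<ge> 1" using psi(3) .
  have K1: "K \<ge> 1" unfolding K_def using M1 p3 by simp
  have Hnn: "H s \<ge> 0" if s: "s < p" for s
  proof -
    define t where "t = (\<lambda>i::nat. if i = 0 then s else 0)"
    have "(\<Sum>i<K. t i) = s" unfolding t_def using K1 by (simp add: sum.delta)
    then have "H s \<ge> (\<Prod>i<K. g i (t i))" using Hb[of t] s unfolding K_def t_def by auto
    moreover have "(\<Prod>i<K. g i (t i)) \<ge> 0" using g0 s p3 unfolding K_def t_def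
      by (intro prod_nonneg) auto
    ultimately show ?thesis by linarith
  qed
  have LHS0: "(\<Sum>s<p. H s) \<ge> 0" using Hnn by (intro sum_nonneg) auto
  have "\<forall>i\<in>{..<K}. \<exists>x. x < p \<and> (\<forall>t<p. g i t \<le> g i x)"
  proof
    fix i assume "i \<in> {..<K}"
    have "0 \<in> {..<p}" using p3 by auto
    then have ne: "{..<p} \<noteq> {}" by blast
    obtain x where "x \<in> {..<p}" "\<forall>y\<in>{..<p}. g i y \<le> g i x"
      using finite_argmax[OF _ ne, of "g i"] by auto
    then show "\<exists>x. x < p \<and> (\<forall>t<p. g i t \<le> g i x)" by auto
  qed
  then obtain ts where ts: "\<forall>i\<in>{..<K}. ts i < p \<and> (\<forall>t<p. g i t \<le> g i (ts i))"
    by (metis bchoice)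
  show ?thesis
  proof (cases "\<exists>i<K. g i (ts i) = 0")
    case True
    then obtain i where i: "i < K" "g i (ts i) = 0" by blast
    have "\<forall>t<p. g i t = 0" using i ts g0 unfolding K_def by (metis lessThan_iff order_antisym)
    then have "(\<Sum>t<p. D t * g i t) = 0" by simp
    then have Z: "(\<Prod>i<K. \<Sum>t<p. D t * g i t) = 0" using i by (intro prod_zero) auto
    show ?thesis unfolding K_def[symmetric] Z using LHS0 by simp
  next
    case False
    define m where "m i = g i (ts i)" for i
    have mpos: "m i > 0" if "i < K" for i
      using False that g0 ts unfolding m_def K_def by (metis lessThan_iff order_le_less)
    have "\<forall>i\<in>{..<K}. \<exists>x. x < p \<and> x \<noteq> ts i \<and> (\<forall>t<p. t \<noteq> ts i \<longrightarrow> g i t \<le> g i x)"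
    proof
      fix i assume "i \<in> {..<K}"
      have ne: "{t. t < p \<and> t \<noteq> ts i} \<noteq> {}"
      proof (cases "ts i = 0")
        case True then have "1 \<in> {t. t < p \<and> t \<noteq> ts i}" using p3 by auto
        then show ?thesis by blast
      next
        case False then have "0 \<in> {t. t < p \<and> t \<noteq> ts i}" using p3 by auto
        then show ?thesis by blast
      qed
      obtain x where "x \<in> {t. t < p \<and> t \<noteq> ts i}" "\<forall>y\<in>{t. t < p \<and> t \<noteq> ts i}. g i y \<le> g i x"
        using finite_argmax[OF _ ne, of "g i"] by auto
      then show "\<exists>x. x < p \<and> x \<noteq> ts i \<and> (\<forall>t<p. t \<noteq> ts i \<longrightarrow> g i t \<le> g i x)" by auto
    qed
    then obtain tp where tp: "\<forall>i\<in>{..<K}. tp i < p \<and> tp i \<noteq> ts i \<and> (\<forall>t<p. t \<noteq> ts i \<longrightarrow> g i t \<le> g i (tp i))"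
      by (metis bchoice)
    define r where "r i = g i (tp i) / m i" for i
    have r01: "0 \<le> r i \<and> r i \<le> 1" if "i < K" for i
    proof -
      have "g i (tp i) \<ge> 0" using g0 tp that unfolding K_def by auto
      moreover have "g i (tp i) \<le> m i" using ts tp that unfolding m_def by auto
      ultimately show ?thesis using mpos[OF that] unfolding r_def by auto
    qed
    have gtp: "g i (tp i) = m i * r i" if "i < K" for i
      using mpos[OF that] unfolding r_def by simp
    define \<phi> where "\<phi> x = 1 - c * (1 - x)" for x
    have \<phi>0: "0 \<le> \<phi> x" "\<phi> x \<le> 1" if "0 \<le> x" "x \<le> 1" for x
    proof -
      show "0 \<le> \<phi> x" using mult_le_one[of c "1 - x"] that c1 unfolding \<phi>_def by linarith
      show "\<phi> x \<le> 1" using that c0 unfolding \<phi>_def by simp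
    qed
    have \<phi>mono: "\<phi> x \<le> \<phi> y" if "x \<le> y" for x y
      using that c0 unfolding \<phi>_def by (simp add: mult_left_mono)
    have abound: "(\<Sum>t<p. D t * g i t) \<le> m i * \<phi> (r i)" if i: "i < K" for i
    proof -
      define z where "z = ts i"
      have z: "z \<in> {..<p}" using ts i unfolding z_def by auto
      have "(\<Sum>t<p. D t * g i t) = D z * g i z + (\<Sum>t\<in>{..<p}-{z}. D t * g i t)"
        using z by (simp add: sum.remove)
      also have "(\<Sum>t\<in>{..<p}-{z}. D t * g i t) \<le> (\<Sum>t\<in>{..<p}-{z}. D t * g i (tp i))"
        using tp i D0 unfolding z_def by (intro sum_mono mult_left_mono) auto
      also have "\<dots> = (\<Sum>t\<in>{..<p}-{z}. D t) * g i (tp i)" by (simp add: sum_distrib_right)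
      also have "(\<Sum>t\<in>{..<p}-{z}. D t) = 1 - D z" using z D1 by (simp add: sum.remove)
      finally have h: "(\<Sum>t<p. D t * g i t) \<le> D z * m i + (1 - D z) * (m i * r i)"
        using gtp[OF i] unfolding m_def z_def by simp
      have "D z * (m i - m i * r i) \<le> (1 - c) * (m i - m i * r i)"
      proof (rule mult_right_mono)
        show "D z \<le> 1 - c" using Dc z by auto
        have "m i * r i \<le> m i * 1" using r01[OF i] mpos[OF i] by (intro mult_left_mono) auto
        then show "0 \<le> m i - m i * r i" by simp
      qed
      then have "D z * m i + (1 - D z) * (m i * r i) \<le> m i * \<phi> (r i)"
        unfolding \<phi>_def by (simp add: algebra_simps)
      then show ?thesis using h by linarith
    qed
    have anonneg: "(\<Sum>t<p. D t * g i t) \<ge> 0" if i: "i < K" for i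
      using D0 g0 i unfolding K_def by (intro sum_nonneg mult_nonneg_nonneg) auto
    have "\<forall>j\<in>{..<p-1}. \<exists>x. x \<in> {j*M..<j*M+M} \<and> (\<forall>i\<in>{j*M..<j*M+M}. r i \<le> r x)"
    proof
      fix j assume "j \<in> {..<p-1}"
      have ne: "{j*M..<j*M+M} \<noteq> {}" using M1 by simp
      show "\<exists>x. x \<in> {j*M..<j*M+M} \<and> (\<forall>i\<in>{j*M..<j*M+M}. r i \<le> r x)"
        using finite_argmax[OF _ ne, of r] by auto
    qed
    then obtain ib where ib: "\<forall>j\<in>{..<p-1}. ib j \<in> {j*M..<j*M+M} \<and> (\<forall>i\<in>{j*M..<j*M+M}. r i \<le> r (ib j))"
      by (metis bchoice)
    have blockK: "i < K" if "i \<in> {j*M..<j*M+M}" "j < p - 1" for i j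
    proof -
      have "j*M + M = (j+1)*M" by simp
      also have "\<dots> \<le> (p-1)*M" using that(2) by (intro mult_le_mono1) simp
      finally show ?thesis using that(1) unfolding K_def by simp
    qed
    have ibK: "ib j < K" if "j < p - 1" for j using ib that blockK by auto
    have ibinj: "inj_on ib {..<p-1}"
    proof (rule inj_onI)
      fix j j' assume "j \<in> {..<p-1}" "j' \<in> {..<p-1}" "ib j = ib j'"
      then show "j = j'" using ib block_div by metis
    qed
    define b where "b j = r (ib j)" for j
    define \<psi> where "\<psi> x = \<phi> x ^ M" for x
    have b01: "0 \<le> b j \<and> b j \<le> 1" if "j < p - 1" for j using r01 ibK that unfolding b_def by auto
    have \<psi>01: "0 \<le> \<psi> x \<and> \<psi> x \<le> 1" if "0 \<le> x" "x \<le> 1" for x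
      using \<phi>0[OF that] unfolding \<psi>_def by (auto intro: power_le_one)
    have \<psi>hi: "\<psi> x \<le> x" if "\<tau> \<le> x" "x \<le> 1" for x
      using psi(4)[OF that] unfolding \<psi>_def \<phi>_def by simp
    have \<psi>lo: "\<psi> x \<le> 1 / real p" if "0 \<le> x" "x < \<tau>" for x
    proof -
      have "\<psi> x \<le> \<psi> \<tau>" unfolding \<psi>_def using \<phi>0[of x] that \<phi>mono[of x \<tau>] psi(2)
        by (intro power_mono) auto
      also have "\<dots> \<le> 1 / real p" using psi(5) unfolding \<psi>_def \<phi>_def .
      finally show ?thesis .
    qed
    define P where "P = (\<Prod>i<K. m i)"
    have Ppos: "P > 0" unfolding P_def using mpos by (intro prod_pos) auto
    have RHS1: "(\<Prod>i<K. \<Sum>t<p. D t * g i t) \<le> P * (\<Prod>i<K. \<phi> (r i))"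
    proof -
      have "(\<Prod>i<K. \<Sum>t<p. D t * g i t) \<le> (\<Prod>i<K. m i * \<phi> (r i))"
        using abound anonneg by (intro prod_mono) auto
      also have "\<dots> = P * (\<Prod>i<K. \<phi> (r i))" unfolding P_def by (simp add: prod.distrib)
      finally show ?thesis .
    qed
    have RHS2: "(\<Prod>i<K. \<phi> (r i)) \<le> (\<Prod>j<p-1. \<psi> (b j))"
    proof -
      have "(\<Prod>i<K. \<phi> (r i)) = (\<Prod>j<p-1. \<Prod>i\<in>{j*M..<j*M+M}. \<phi> (r i))"
        unfolding K_def by (rule prod.nat_group[symmetric])
      also have "\<dots> \<le> (\<Prod>j<p-1. \<psi> (b j))"
      proof (rule prod_mono)
        fix j assume j: "j \<in> {..<p-1}"
        have "(\<Prod>i\<in>{j*M..<j*M+M}. \<phi> (r i)) \<le> (\<Prod>i\<in>{j*M..<j*M+M}. \<phi> (b j))"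
        proof (rule prod_mono)
          fix i assume i: "i \<in> {j*M..<j*M+M}"
          have iK: "i < K" using blockK i j by auto
          show "0 \<le> \<phi> (r i) \<and> \<phi> (r i) \<le> \<phi> (b j)"
            using \<phi>0 r01[OF iK] \<phi>mono ib i j unfolding b_def by auto
        qed
        also have "\<dots> = \<psi> (b j)" unfolding \<psi>_def by simp
        finally show "0 \<le> (\<Prod>i\<in>{j*M..<j*M+M}. \<phi> (r i)) \<and> (\<Prod>i\<in>{j*M..<j*M+M}. \<phi> (r i)) \<le> \<psi> (b j)"
          using \<phi>0 r01 blockK j by (auto intro!: prod_nonneg)
      qed
      finally show ?thesis .
    qed
    have RHS: "real p * (\<Prod>i<K. \<Sum>t<p. D t * g i t) \<le> real p * P * (\<Prod>j<p-1. \<psi> (b j))"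
    proof -
      have "(\<Prod>i<K. \<Sum>t<p. D t * g i t) \<le> P * (\<Prod>j<p-1. \<psi> (b j))"
        using RHS1 RHS2 Ppos by (meson mult_left_mono less_imp_le order_trans)
      then show ?thesis using p3 by (simp add: mult.assoc)
    qed
    define tS where "tS S i = (if i \<in> ib ` S then tp i else ts i)" for S i
    have tS_lt: "\<forall>i<K. tS S i < p" for S using ts tp unfolding tS_def by auto
    have tS_prod: "(\<Prod>i<K. g i (tS S i)) = P * (\<Prod>j\<in>S. b j)" if S: "S \<subseteq> {..<p-1}" for S
    proof -
      have ibS: "ib ` S \<subseteq> {..<K}" using S ibK by auto
      have "(\<Prod>i<K. g i (tS S i)) = (\<Prod>i<K. m i * (if i \<in> ib ` S then r i else 1))"
        using gtp unfolding tS_def m_def by (intro prod.cong) auto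
      also have "\<dots> = P * (\<Prod>i<K. (if i \<in> ib ` S then r i else 1))"
        unfolding P_def by (simp add: prod.distrib)
      also have "(\<Prod>i<K. (if i \<in> ib ` S then r i else 1)) = (\<Prod>i\<in>{..<K} \<inter> ib ` S. r i)"
        by (simp add: prod.inter_restrict)
      also have "{..<K} \<inter> ib ` S = ib ` S" using ibS by blast
      also have "(\<Prod>i\<in>ib ` S. r i) = (\<Prod>j\<in>S. b j)"
        using inj_on_subset[OF ibinj S] unfolding b_def by (simp add: prod.reindex)
      finally show ?thesis .
    qed
    define \<delta> where "\<delta> j = int (tp (ib j)) - int (ts (ib j))" for j
    have tS_sum: "int (\<Sum>i<K. tS S i) = int (\<Sum>i<K. ts i) + (\<Sum>j\<in>S. \<delta> j)" if S: "S \<subseteq> {..<p-1}" for S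
    proof -
      have ibS: "ib ` S \<subseteq> {..<K}" using S ibK by auto
      have "int (\<Sum>i<K. tS S i) = (\<Sum>i<K. int (ts i) + (if i \<in> ib ` S then int (tp i) - int (ts i) else 0))"
        unfolding tS_def by (simp add: of_nat_sum) (intro sum.cong, auto)
      also have "\<dots> = int (\<Sum>i<K. ts i) + (\<Sum>i<K. (if i \<in> ib ` S then int (tp i) - int (ts i) else 0))"
        by (simp add: sum.distrib of_nat_sum)
      also have "(\<Sum>i<K. (if i \<in> ib ` S then int (tp i) - int (ts i) else 0)) = (\<Sum>i\<in>{..<K} \<inter> ib ` S. int (tp i) - int (ts i))"
        by (simp add: sum.inter_restrict)
      also have "{..<K} \<inter> ib ` S = ib ` S" using ibS by blast
      also have "(\<Sum>i\<in>ib ` S. int (tp i) - int (ts i)) = (\<Sum>j\<in>S. \<delta> j)"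
        using inj_on_subset[OF ibinj S] unfolding \<delta>_def by (simp add: sum.reindex)
      finally show ?thesis .
    qed
    have \<delta>nd: "\<forall>j<p-1. \<not> int p dvd \<delta> j"
    proof (intro allI impI notI)
      fix j assume j: "j < p - 1" and dv: "int p dvd \<delta> j"
      have iK: "ib j < K" using ibK j .
      have ne: "\<delta> j \<noteq> 0" using tp iK unfolding \<delta>_def by auto
      have a1: "tp (ib j) < p" and a2: "ts (ib j) < p" using tp ts iK by auto
      have "\<bar>\<delta> j\<bar> < int p" using a1 a2 unfolding \<delta>_def by (auto simp: abs_less_iff)
      moreover have "\<bar>int p\<bar> \<le> \<bar>\<delta> j\<bar>" using dvd_imp_le_int[OF ne dv] .
      ultimately show False by simp
    qed
    show ?thesis
    proof (cases "\<forall>j<p-1. \<tau> \<le> b j")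
      case True
      have Hs: "H s \<ge> P * (\<Prod>j<p-1. b j)" if s: "s < p" for s
      proof -
        define rr where "rr = (int s - int (\<Sum>i<K. ts i)) mod int p"
        have rr: "0 \<le> rr" "rr < int p" using p3 unfolding rr_def by auto
        obtain S where S: "S \<subseteq> {..<p-1}" "(\<Sum>j\<in>S. \<delta> j) mod int p = rr"
          using subsums_all[OF pp \<delta>nd rr] by blast
        have "int ((\<Sum>i<K. tS S i) mod p) = (int (\<Sum>i<K. ts i) + (\<Sum>j\<in>S. \<delta> j)) mod int p"
          using tS_sum[OF S(1)] by (simp add: zmod_int)
        also have "\<dots> = (int (\<Sum>i<K. ts i) + rr) mod int p" by (metis S(2) mod_add_right_eq)
        also have "\<dots> = int s" unfolding rr_def using s by (simp add: mod_add_right_eq)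
        finally have "(\<Sum>i<K. tS S i) mod p = s" by simp
        then have "H s \<ge> (\<Prod>i<K. g i (tS S i))" using Hb[of "tS S"] tS_lt unfolding K_def by auto
        also have "(\<Prod>i<K. g i (tS S i)) = P * (\<Prod>j\<in>S. b j)" using tS_prod[OF S(1)] .
        finally have h1: "H s \<ge> P * (\<Prod>j\<in>S. b j)" .
        have "(\<Prod>j\<in>S. b j) \<ge> (\<Prod>j<p-1. b j)"
          using b01 S(1) by (intro prod_sub_ge) auto
        then have "P * (\<Prod>j\<in>S. b j) \<ge> P * (\<Prod>j<p-1. b j)" using Ppos by (simp add: mult_left_mono)
        then show ?thesis using h1 by linarith
      qed
      have "(\<Sum>s<p. H s) \<ge> (\<Sum>s<p. P * (\<Prod>j<p-1. b j))" using Hs by (intro sum_mono) auto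
      moreover have "(\<Sum>s<p. P * (\<Prod>j<p-1. b j)) = real p * P * (\<Prod>j<p-1. b j)" by simp
      moreover have "(\<Prod>j<p-1. \<psi> (b j)) \<le> (\<Prod>j<p-1. b j)"
        using True \<psi>01 \<psi>hi b01 by (intro prod_mono) auto
      moreover have "real p * P \<ge> 0" using Ppos by simp
      ultimately have "(\<Sum>s<p. H s) \<ge> real p * P * (\<Prod>j<p-1. \<psi> (b j))"
        by (smt (verit) mult_left_mono)
      then show ?thesis using RHS unfolding K_def by linarith
    next
      case False
      then obtain j0 where j0: "j0 < p - 1" "b j0 < \<tau>" by (auto simp: not_le)
      define T where "T = {j\<in>{..<p-1}. \<tau> \<le> b j}"
      have T: "T \<subseteq> {..<p-1}" unfolding T_def by auto
      define s0 where "s0 = (\<Sum>i<K. tS T i) mod p"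
      have s0: "s0 < p" using p3 unfolding s0_def by simp
      have HH1: "H s0 \<ge> P * (\<Prod>j\<in>T. b j)"
        using Hb[of "tS T"] tS_lt tS_prod[OF T] unfolding K_def s0_def by auto
      have HH2: "(\<Sum>s<p. H s) \<ge> H s0" using Hnn s0 by (intro member_le_sum) auto
      have HH3: "(\<Prod>j<p-1. \<psi> (b j)) \<le> (\<Prod>j\<in>T. b j) * (1 / real p)"
      proof -
        have "(\<Prod>j<p-1. \<psi> (b j)) = (\<Prod>j\<in>T. \<psi> (b j)) * (\<Prod>j\<in>{..<p-1} - T. \<psi> (b j))"
          using T by (metis finite_lessThan prod.subset_diff mult.commute)
        moreover have "(\<Prod>j\<in>{..<p-1} - T. \<psi> (b j)) \<le> \<psi> (b j0)"
          using j0 b01 \<psi>01 unfolding T_def by (intro prod_le_single) auto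
        moreover have "\<psi> (b j0) \<le> 1 / real p" using \<psi>lo b01 j0 by auto
        moreover have "(\<Prod>j\<in>T. \<psi> (b j)) \<le> (\<Prod>j\<in>T. b j)"
          using \<psi>01 \<psi>hi b01 T unfolding T_def by (intro prod_mono) auto
        moreover have "(\<Prod>j\<in>T. \<psi> (b j)) \<ge> 0" using \<psi>01 b01 T by (intro prod_nonneg) auto
        moreover have "(\<Prod>j\<in>{..<p-1} - T. \<psi> (b j)) \<ge> 0" using \<psi>01 b01 by (intro prod_nonneg) auto
        ultimately show ?thesis by (smt (verit) mult_mono)
      qed
      have "real p * P * (\<Prod>j<p-1. \<psi> (b j)) \<le> real p * P * ((\<Prod>j\<in>T. b j) * (1 / real p))"
        using Ppos HH3 by (intro mult_left_mono) auto
      also have "\<dots> = P * (\<Prod>j\<in>T. b j)" using p3 by simp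
      finally show ?thesis using RHS unfolding K_def
        using HH1 HH2 by linarith
    qed
  qed
qed



definition vs :: "nat \<Rightarrow> nat \<Rightarrow> nat \<Rightarrow> (nat \<Rightarrow> nat \<Rightarrow> nat) \<Rightarrow> (nat \<Rightarrow> nat)" where
  "vs p n K a = (\<lambda>j\<in>{..<n}. (\<Sum>i<K. a i j) mod p)"

definition MSum :: "nat \<Rightarrow> nat \<Rightarrow> nat \<Rightarrow> (nat \<Rightarrow> (nat \<Rightarrow> nat) set) \<Rightarrow> (nat \<Rightarrow> nat) set" where
  "MSum p n K As = {vs p n K a | a. \<forall>i<K. a i \<in> As i}"

lemma vs_Suc: "vs p n (Suc K) c = vadd p n (c K) (vs p n K c)"
  unfolding vs_def vadd_def by (rule ext) (simp add: mod_add_right_eq add.commute)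

lemma vs_upd: "vs p n K (c(K := a)) = vs p n K c"
  unfolding vs_def by (rule ext) simp

lemma ks_MS: "ksumset p n K A = MSum p n K (\<lambda>_. A)"
proof (induction K)
  case 0
  have "vs p n 0 a = vzero n" for a unfolding vs_def vzero_def by simp
  then show ?case unfolding MSum_def by auto
next
  case (Suc K)
  show ?case
  proof
    show "ksumset p n (Suc K) A \<subseteq> MSum p n (Suc K) (\<lambda>_. A)"
    proof
      fix x assume "x \<in> ksumset p n (Suc K) A"
      then obtain a y where ay: "a \<in> A" "y \<in> ksumset p n K A" "x = vadd p n a y" by auto
      then obtain c where c: "\<forall>i<K. c i \<in> A" "y = vs p n K c" using Suc unfolding MSum_def by auto
      have "x = vs p n (Suc K) (c(K := a))" using ay c by (simp add: vs_Suc vs_upd)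
      moreover have "\<forall>i<Suc K. (c(K := a)) i \<in> A" using c ay by (auto simp: less_Suc_eq)
      ultimately show "x \<in> MSum p n (Suc K) (\<lambda>_. A)" unfolding MSum_def by blast
    qed
  next
    show "MSum p n (Suc K) (\<lambda>_. A) \<subseteq> ksumset p n (Suc K) A"
    proof
      fix x assume "x \<in> MSum p n (Suc K) (\<lambda>_. A)"
      then obtain c where c: "\<forall>i<Suc K. c i \<in> A" "x = vs p n (Suc K) c" unfolding MSum_def by auto
      have "vs p n K c \<in> ksumset p n K A" using Suc c unfolding MSum_def by auto
      moreover have "c K \<in> A" using c by auto
      ultimately show "x \<in> ksumset p n (Suc K) A" using c(2) vs_Suc by auto
    qed
  qed
qed

lemma MS_sub: "p > 0 \<Longrightarrow> MSum p n K As \<subseteq> Fp_vecs p n"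
  unfolding MSum_def vs_def Fp_vecs_def by (auto split: if_splits)

lemma Fp_fin: "finite (Fp_vecs p n)"
  unfolding Fp_vecs_def by (intro finite_PiE) auto

lemma MS_fin: "p > 0 \<Longrightarrow> finite (MSum p n K As)"
  by (rule finite_subset[OF MS_sub Fp_fin])

lemma dens_nonneg:
  assumes "\<forall>x<p. D x \<ge> 0" "A \<subseteq> Fp_vecs p n"
  shows "prod_density n D A \<ge> 0"
  unfolding prod_density_def
proof (intro sum_nonneg prod_nonneg)
  fix x i assume "x \<in> A" "i \<in> {..<n}"
  then have "x i < p" using assms(2) unfolding Fp_vecs_def by auto
  then show "D (x i) \<ge> 0" using assms(1) by auto
qed



definition fibr :: "nat \<Rightarrow> (nat \<Rightarrow> nat) set \<Rightarrow> nat \<Rightarrow> (nat \<Rightarrow> nat) set" where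
  "fibr n A t = (\<lambda>x. restrict x {..<n}) ` {x \<in> A. x n = t}"

lemma fib_sub:
  assumes "A \<subseteq> Fp_vecs p (Suc n)"
  shows "fibr n A t \<subseteq> Fp_vecs p n"
  using assms unfolding fibr_def Fp_vecs_def by (auto simp: PiE_def Pi_def)

lemma restrict_inj:
  assumes "A \<subseteq> Fp_vecs p (Suc n)"
  shows "inj_on (\<lambda>x. restrict x {..<n}) {x \<in> A. x n = t}"
proof (rule inj_onI)
  fix x y assume x: "x \<in> {x \<in> A. x n = t}" and y: "y \<in> {x \<in> A. x n = t}"
    and e: "restrict x {..<n} = restrict y {..<n}"
  show "x = y"
  proof
    fix j
    show "x j = y j"
    proof (cases "j < n")
      case True then show ?thesis using fun_cong[OF e, of j] by simp
    next
      case False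
      show ?thesis
      proof (cases "j = n")
        case True then show ?thesis using x y by simp
      next
        case False
        then have "j \<notin> {..<Suc n}" using \<open>\<not> j < n\<close> by auto
        have "x \<in> Fp_vecs p (Suc n)" "y \<in> Fp_vecs p (Suc n)" using x y assms by auto
        then have "x j = undefined" "y j = undefined" using \<open>j \<notin> {..<Suc n}\<close>
          unfolding Fp_vecs_def by (auto simp: PiE_def extensional_def)
        then show ?thesis by simp
      qed
    qed
  qed
qed

lemma dens_Suc:
  assumes A: "A \<subseteq> Fp_vecs p (Suc n)"
  shows "prod_density (Suc n) D A = (\<Sum>t<p. D t * prod_density n D (fibr n A t))"
proof -
  have fA: "finite A" using finite_subset[OF A Fp_fin] .
  have "prod_density (Suc n) D A = (\<Sum>x\<in>A. D (x n) * (\<Prod>j<n. D (x j)))"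
    unfolding prod_density_def by (simp add: mult.commute)
  also have "\<dots> = (\<Sum>t<p. \<Sum>x\<in>{x. x \<in> A \<and> x n = t}. D (x n) * (\<Prod>j<n. D (x j)))"
  proof (rule sum.group[symmetric])
    show "finite A" by (rule fA)
    show "finite {..<p}" by simp
    show "(\<lambda>x. x n) ` A \<subseteq> {..<p}" using A unfolding Fp_vecs_def by auto
  qed
  also have "\<dots> = (\<Sum>t<p. D t * prod_density n D (fibr n A t))"
  proof (rule sum.cong)
    fix t assume "t \<in> {..<p}"
    have "(\<Sum>x\<in>{x. x \<in> A \<and> x n = t}. D (x n) * (\<Prod>j<n. D (x j)))
        = D t * (\<Sum>x\<in>{x \<in> A. x n = t}. (\<Prod>j<n. D (x j)))"
      by (simp add: sum_distrib_left)
    also have "(\<Sum>x\<in>{x \<in> A. x n = t}. (\<Prod>j<n. D (x j)))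
        = (\<Sum>x\<in>{x \<in> A. x n = t}. (\<Prod>j<n. D (restrict x {..<n} j)))"
      by (intro sum.cong prod.cong) auto
    also have "\<dots> = prod_density n D (fibr n A t)"
      unfolding prod_density_def fibr_def
      by (rule sum.reindex[OF restrict_inj[OF A], symmetric, unfolded comp_def])
    finally show "(\<Sum>x\<in>{x. x \<in> A \<and> x n = t}. D (x n) * (\<Prod>j<n. D (x j))) = D t * prod_density n D (fibr n A t)" .
  qed simp
  finally show ?thesis .
qed

lemma card_fibers:
  assumes "p > 0" "S \<subseteq> Fp_vecs p (Suc n)"
  shows "card S = (\<Sum>s<p. card {x \<in> S. x n = s})"
proof -
  have fS: "finite S" using finite_subset[OF assms(2) Fp_fin] .
  have "(\<Sum>s<p. \<Sum>x\<in>{x. x \<in> S \<and> x n = s}. (1::nat)) = (\<Sum>x\<in>S. 1)"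
    by (rule sum.group) (use fS assms(2) in \<open>auto simp: Fp_vecs_def\<close>)
  then show ?thesis by simp
qed

definition dimprop :: "nat \<Rightarrow> nat \<Rightarrow> (nat \<Rightarrow> real) \<Rightarrow> bool" where
  "dimprop p K D = (\<forall>(g::nat \<Rightarrow> nat \<Rightarrow> real) (H::nat \<Rightarrow> real). (\<forall>i<K. \<forall>t<p. g i t \<ge> 0) \<longrightarrow>
       (\<forall>t. (\<forall>i<K. t i < p) \<longrightarrow> H ((\<Sum>i<K. t i) mod p) \<ge> (\<Prod>i<K. g i (t i))) \<longrightarrow>
       (\<Sum>s<p. H s) \<ge> real p * (\<Prod>i<K. \<Sum>t<p. D t * g i t))"

lemma main_ind:
  fixes p K :: nat and D :: "nat \<Rightarrow> real"
  assumes p0: "p > 0" and D0: "\<forall>x<p. D x \<ge> 0"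
    and dp: "dimprop p K D"
  shows "\<forall>As. (\<forall>i<K. As i \<subseteq> Fp_vecs p n) \<longrightarrow>
           real (card (MSum p n K As)) \<ge> real p ^ n * (\<Prod>i<K. prod_density n D (As i))"
proof (induction n)
  case 0
  show ?case
  proof (intro allI impI)
    fix As assume As: "\<forall>i<K. As i \<subseteq> Fp_vecs p 0"
    have F0: "Fp_vecs p 0 = {\<lambda>_. undefined}" unfolding Fp_vecs_def by simp
    have d0: "prod_density 0 D A = real (card A)" for A unfolding prod_density_def by simp
    show "real (card (MSum p 0 K As)) \<ge> real p ^ 0 * (\<Prod>i<K. prod_density 0 D (As i))"
    proof (cases "\<exists>i<K. As i = {}")
      case True
      then obtain i where i: "i < K" "As i = {}" by blast
      have Z: "(\<Prod>i<K. prod_density 0 D (As i)) = 0" unfolding d0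
        by (rule prod_zero) (use i in \<open>auto intro!: bexI[of _ i]\<close>)
      show ?thesis unfolding Z by simp
    next
      case False
      then have "\<forall>i\<in>{..<K}. \<exists>x. x \<in> As i" by auto
      then obtain a where a: "\<forall>i\<in>{..<K}. a i \<in> As i" by (metis bchoice)
      then have "vs p 0 K a \<in> MSum p 0 K As" unfolding MSum_def by auto
      then have "card (MSum p 0 K As) \<ge> 1" using MS_fin[OF p0]
        by (metis One_nat_def Suc_leI card_gt_0_iff empty_iff)
      moreover have "(\<Prod>i<K. prod_density 0 D (As i)) \<le> 1"
      proof (intro prod_le_1 conjI)
        fix i assume "i \<in> {..<K}"
        then have "As i \<subseteq> {\<lambda>_. undefined}" using As F0 by auto
        then have "card (As i) \<le> 1" by (metis card.empty card_mono finite.emptyI finite_insert is_singletonI is_singleton_altdef)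
        then show "prod_density 0 D (As i) \<le> 1" "prod_density 0 D (As i) \<ge> 0" unfolding d0 by auto
      qed
      ultimately show ?thesis by simp
    qed
  qed
next
  case (Suc n)
  show ?case
  proof (intro allI impI)
    fix As assume As: "\<forall>i<K. As i \<subseteq> Fp_vecs p (Suc n)"
    define Sm where "Sm = MSum p (Suc n) K As"
    define H where "H s = real (card {x \<in> Sm. x n = s}) / real p ^ n" for s
    define g where "g i t = prod_density n D (fibr n (As i) t)" for i t
    have g0: "\<forall>i<K. \<forall>t<p. g i t \<ge> 0"
    proof (intro allI impI)
      fix i t assume "i < K" "t < p"
      then have "fibr n (As i) t \<subseteq> Fp_vecs p n" using As fib_sub by blast
      then show "g i t \<ge> 0" unfolding g_def by (rule dens_nonneg[OF D0])
    qed
    have Hb: "H ((\<Sum>i<K. t i) mod p) \<ge> (\<Prod>i<K. g i (t i))" if t: "\<forall>i<K. t i < p" for t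
    proof -
      define s where "s = (\<Sum>i<K. t i) mod p"
      define Bs where "Bs i = fibr n (As i) (t i)" for i
      have Bs: "\<forall>i<K. Bs i \<subseteq> Fp_vecs p n"
      proof (intro allI impI)
        fix i assume "i < K"
        then show "Bs i \<subseteq> Fp_vecs p n" unfolding Bs_def using As fib_sub by blast
      qed
      have IH0: "real (card (MSum p n K Bs)) \<ge> real p ^ n * (\<Prod>i<K. prod_density n D (Bs i))"
        using Suc.IH[THEN spec, of Bs, THEN mp, OF Bs] .
      have "(\<Prod>i<K. prod_density n D (Bs i)) = (\<Prod>i<K. g i (t i))" unfolding g_def Bs_def by simp
      then have IH: "real (card (MSum p n K Bs)) \<ge> real p ^ n * (\<Prod>i<K. g i (t i))"
        using IH0 by simp
      have sub: "MSum p n K Bs \<subseteq> (\<lambda>x. restrict x {..<n}) ` {x \<in> Sm. x n = s}"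
      proof
        fix y assume "y \<in> MSum p n K Bs"
        then obtain b where b: "\<forall>i<K. b i \<in> Bs i" "y = vs p n K b" unfolding MSum_def by auto
        have "\<forall>i\<in>{..<K}. \<exists>x. x \<in> As i \<and> x n = t i \<and> b i = restrict x {..<n}"
          using b(1) unfolding Bs_def fibr_def by auto
        then obtain a where a: "\<forall>i\<in>{..<K}. a i \<in> As i \<and> a i n = t i \<and> b i = restrict (a i) {..<n}"
          by (metis bchoice)
        define x where "x = vs p (Suc n) K a"
        have xS: "x \<in> Sm" unfolding x_def Sm_def MSum_def using a by auto
        have xn: "x n = s" unfolding x_def vs_def s_def using a by simp
        have "restrict x {..<n} = y"
        proof
          fix j show "restrict x {..<n} j = y j"
          proof (cases "j < n")
            case True
            have "(\<Sum>i<K. a i j) = (\<Sum>i<K. b i j)" using a True by (intro sum.cong) auto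
            then show ?thesis using True unfolding x_def b(2) vs_def by simp
          next
            case False then show ?thesis unfolding b(2) vs_def by simp
          qed
        qed
        then show "y \<in> (\<lambda>x. restrict x {..<n}) ` {x \<in> Sm. x n = s}" using xS xn by blast
      qed
      have finSm: "finite Sm" unfolding Sm_def using MS_fin[OF p0] .
      have "card (MSum p n K Bs) \<le> card ((\<lambda>x. restrict x {..<n}) ` {x \<in> Sm. x n = s})"
        using sub finSm by (intro card_mono) auto
      also have "\<dots> \<le> card {x \<in> Sm. x n = s}" using finSm by (intro card_image_le) auto
      finally have "real p ^ n * (\<Prod>i<K. g i (t i)) \<le> real (card {x \<in> Sm. x n = s})"
        using IH by linarith
      then show ?thesis unfolding H_def s_def[symmetric] using p0 by (simp add: field_simps)
    qed
    have "(\<Sum>s<p. H s) \<ge> real p * (\<Prod>i<K. \<Sum>t<p. D t * g i t)"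
      using dp g0 Hb unfolding dimprop_def by blast
    also have "(\<Prod>i<K. \<Sum>t<p. D t * g i t) = (\<Prod>i<K. prod_density (Suc n) D (As i))"
      unfolding g_def using As dens_Suc by (intro prod.cong) auto
    finally have h: "(\<Sum>s<p. H s) \<ge> real p * (\<Prod>i<K. prod_density (Suc n) D (As i))" .
    have cS: "card Sm = (\<Sum>s<p. card {x \<in> Sm. x n = s})"
      unfolding Sm_def by (rule card_fibers[OF p0 MS_sub[OF p0]])
    have "real (card Sm) = (\<Sum>s<p. real (card {x \<in> Sm. x n = s}))"
      unfolding cS by (rule of_nat_sum)
    also have "\<dots> = real p ^ n * (\<Sum>s<p. H s)" unfolding H_def using p0 by (simp add: sum_divide_distrib[symmetric])
    finally have E1: "real (card Sm) = real p ^ n * (\<Sum>s<p. H s)" .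
    have E2: "real p ^ n * (\<Sum>s<p. H s) \<ge> real p ^ n * (real p * (\<Prod>i<K. prod_density (Suc n) D (As i)))"
      using h by (intro mult_left_mono) auto
    show "real (card (MSum p (Suc n) K As)) \<ge> real p ^ Suc n * (\<Prod>i<K. prod_density (Suc n) D (As i))"
    proof -
      have "real p ^ Suc n * (\<Prod>i<K. prod_density (Suc n) D (As i)) = real p ^ n * (real p * (\<Prod>i<K. prod_density (Suc n) D (As i)))"
        by (simp only: power_Suc mult.assoc mult.left_commute)
      then show ?thesis using E1 E2 unfolding Sm_def by linarith
    qed
  qed
qed



theorem proposition3p4:
  fixes p n M :: nat and c \<epsilon> :: real and D :: "nat \<Rightarrow> real" and A :: "(nat \<Rightarrow> nat) set"
  assumes "prime p" and "p \<ge> 3" and "c > 0"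
    and "M = nat \<lceil>2 * real p ^ 2 * ln (real p) / (c * pi ^ 2)\<rceil>"
    and "\<forall>x<p. D x \<ge> 0" and "(\<Sum>x<p. D x) = 1"
    and "\<forall>x<p. D x \<le> 1 - c"
    and "A \<subseteq> Fp_vecs p n"
    and "\<epsilon> = prod_density n D A"
  shows "unif_density p n (ksumset p n ((p - 1) * M) A) \<ge> \<epsilon> ^ ((p - 1) * M)"
proof -
  define K where "K = (p - 1) * M"
  have p0: "p > 0" using assms(2) by simp
  have d1: "dimprop p K D"
    unfolding dimprop_def
  proof (intro allI impI)
    fix g :: "nat \<Rightarrow> nat \<Rightarrow> real" and H :: "nat \<Rightarrow> real"
    assume a1: "\<forall>i<K. \<forall>t<p. g i t \<ge> 0"
      and a2: "\<forall>t. (\<forall>i<K. t i < p) \<longrightarrow> H ((\<Sum>i<K. t i) mod p) \<ge> (\<Prod>i<K. g i (t i))"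
    show "(\<Sum>s<p. H s) \<ge> real p * (\<Prod>i<K. \<Sum>t<p. D t * g i t)"
      unfolding K_def by (rule dim1[OF assms(1-7) a1[unfolded K_def]]) (use a2 K_def in blast)
  qed
  have allAs: "\<forall>As. (\<forall>i<K. As i \<subseteq> Fp_vecs p n) \<longrightarrow>
           real (card (MSum p n K As)) \<ge> real p ^ n * (\<Prod>i<K. prod_density n D (As i))"
    by (rule main_ind[OF p0 assms(5) d1])
  have "real (card (MSum p n K (\<lambda>_. A))) \<ge> real p ^ n * (\<Prod>i<K. prod_density n D A)"
    using allAs[THEN spec, of "\<lambda>_. A"] assms(8) by simp
  then have h: "real (card (ksumset p n K A)) \<ge> real p ^ n * \<epsilon> ^ K"
    unfolding ks_MS assms(9) by simp
  have pn: "real p ^ n > 0" using p0 by simp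
  have "\<epsilon> ^ K \<le> real (card (ksumset p n K A)) / real p ^ n"
    using h pn by (simp add: le_divide_eq mult.commute)
  then show ?thesis unfolding unif_density_def K_def .
qed


end
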